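(* In the crossed product setting described in the context, with $\ast$ an involution on $D$ satisfying $K^\ast\subseteq K$, the following are equivalent: (1) $D\otimes_F K$ is formally real, i.e. the involution $\#$ on $M_n(K)$ is formally real; (2) $\ast$ is formally real on $D$ and $(k^\ast)^\sigma=(k^\sigma)^\ast$ for every $k\in K$ and $\sigma\in G$; (3) $e_\sigma^\ast e_\sigma\in K$ for every $\sigma\in G$, and there exists a unital hermitian cone on $(K,\ast)$ containing all $e_\sigma^\ast e_\sigma$, $\sigma\in G$.
   Context: Let $K/F$ be a finite Galois extension of fields of characteristic $0$ with Galois group $G$, $n=|G|$; write $k^\sigma$ for the image of $k\in K$ under $\sigma$. Let $\Phi\colon G\times G\to K\setminus\{0\}$ be a normalized $2$-cocycle and $D=(K/F,\Phi)$ the crossed product: right $K$-vector space with basis $(e_\sigma)_{\sigma\in G}$, $e_{\mathrm{id}}=1$, multiplication $(\sum_\sigma e_\sigma c_\sigma)(\sum_\tau e_\tau d_\tau)=\sum_{\sigma,\tau}e_{\sigma\tau}\Phi(\sigma,\tau)c_\sigma^\tau d_\tau$ (so $ke_\sigma=e_\sigma k^\sigma$). Assume $D$ is a division algebra. Define $f\colon D\to K$ by $f(\sum_\sigma e_\sigma c_\sigma)=c_{\mathrm{id}}$. Let $\lambda\colon D\to M_n(K)$ (rows and columns indexed by $G$) be the left regular representation, $ae_\tau=\sum_\sigma e_\sigma\lambda(a)_{\sigma\tau}$; the map $a\otimes k\mapsto\lambda(a)k$ is an isomorphism $D\otimes_F K\cong M_n(K)$. For $X=[x_{\sigma\tau}]\in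 M_n(K)$ put $X^\ast=[x_{\tau\sigma}^\ast]$, let $A=[f(e_\sigma^\ast e_\tau)]_{\sigma,\tau\in G}$ (invertible with $A^\ast=A$), and let $X^\#=A^{-1}X^\ast A$, the involution on $M_n(K)$ with $\lambda(a^\ast)=\lambda(a)^\#$. An involution $\#$ on a ring $R$ is formally real if every finite sum of nonzero elements $rr^\#$ is nonzero. A unital hermitian cone on a ring $R$ with involution $\ast$ is a subset $M\subseteq\{r:r^\ast=r\}$ with $1\in M$, $M+M\subseteq M$, $aMa^\ast\subseteq M$ for all $a\in R$, and $M\cap-M=\{0\}$. *)

theory Defs
  imports Main
begin

text \<open>The field K is the type 'k (characteristic 0). The Galois group G is a finite
group of field automorphisms of K; F is its fixed field, so that (Artin) K/F is a finite Galois
extension with group G. An element sigma of G is represented by the map k |-> k^sigma.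
Since the paper writes the action exponentially (right action), (k^sigma)^tau = k^(sigma tau),
so the group product sigma tau corresponds to the composition tau o sigma.\<close>

definition galois_group :: "('k::field_char_0 \<Rightarrow> 'k) set \<Rightarrow> bool" where
  "galois_group G \<longleftrightarrow> finite G \<and> id \<in> G \<and> (\<forall>\<sigma>\<in>G. \<forall>\<tau>\<in>G. \<tau> \<circ> \<sigma> \<in> G)
     \<and> (\<forall>\<sigma>\<in>G. inv \<sigma> \<in> G)
     \<and> (\<forall>\<sigma>\<in>G. bij \<sigma> \<and> (\<forall>x y. \<sigma> (x + y) = \<sigma> x + \<sigma> y)
                  \<and> (\<forall>x y. \<sigma> (x * y) = \<sigma> x * \<sigma> y) \<and> \<sigma> 1 = 1)"

definition fixed_field :: "('k::field_char_0 \<Rightarrow> 'k) set \<Rightarrow> 'k set" where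
  "fixed_field G = {k. \<forall>\<sigma>\<in>G. \<sigma> k = k}"

definition gmul :: "('k \<Rightarrow> 'k) \<Rightarrow> ('k \<Rightarrow> 'k) \<Rightarrow> ('k \<Rightarrow> 'k)" where
  "gmul \<sigma> \<tau> = \<tau> \<circ> \<sigma>"

definition normalized_cocycle :: "('k::field_char_0 \<Rightarrow> 'k) set \<Rightarrow> (('k \<Rightarrow> 'k) \<Rightarrow> ('k \<Rightarrow> 'k) \<Rightarrow> 'k) \<Rightarrow> bool" where
  "normalized_cocycle G \<Phi> \<longleftrightarrow>
     (\<forall>\<sigma>\<in>G. \<forall>\<tau>\<in>G. \<Phi> \<sigma> \<tau> \<noteq> 0)
   \<and> (\<forall>\<sigma>\<in>G. \<Phi> id \<sigma> = 1 \<and> \<Phi> \<sigma> id = 1)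
   \<and> (\<forall>\<sigma>\<in>G. \<forall>\<tau>\<in>G. \<forall>\<rho>\<in>G.
        \<Phi> (gmul \<sigma> \<tau>) \<rho> * \<rho> (\<Phi> \<sigma> \<tau>) = \<Phi> \<sigma> (gmul \<tau> \<rho>) * \<Phi> \<tau> \<rho>)"

text \<open>Crossed product D: an element sum_sigma e_sigma c_sigma is its coefficient function c,
vanishing outside G.\<close>

definition cp_carrier :: "('k::field_char_0 \<Rightarrow> 'k) set \<Rightarrow> (('k \<Rightarrow> 'k) \<Rightarrow> 'k) set" where
  "cp_carrier G = {c. \<forall>\<sigma>. \<sigma> \<notin> G \<longrightarrow> c \<sigma> = 0}"

definition cp_add :: "(('k::field_char_0 \<Rightarrow> 'k) \<Rightarrow> 'k) \<Rightarrow> (('k \<Rightarrow> 'k) \<Rightarrow> 'k) \<Rightarrow> (('k \<Rightarrow> 'k) \<Rightarrow> 'k)" where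
  "cp_add c d = (\<lambda>\<sigma>. c \<sigma> + d \<sigma>)"

definition cp_zero :: "('k::field_char_0 \<Rightarrow> 'k) \<Rightarrow> 'k" where
  "cp_zero = (\<lambda>_. 0)"

definition cp_mult :: "('k::field_char_0 \<Rightarrow> 'k) set \<Rightarrow> (('k \<Rightarrow> 'k) \<Rightarrow> ('k \<Rightarrow> 'k) \<Rightarrow> 'k)
    \<Rightarrow> (('k \<Rightarrow> 'k) \<Rightarrow> 'k) \<Rightarrow> (('k \<Rightarrow> 'k) \<Rightarrow> 'k) \<Rightarrow> (('k \<Rightarrow> 'k) \<Rightarrow> 'k)" where
  "cp_mult G \<Phi> c d = (\<lambda>\<rho>. \<Sum>\<sigma>\<in>G. \<Sum>\<tau>\<in>G.
      if gmul \<sigma> \<tau> = \<rho> then \<Phi> \<sigma> \<tau> * \<tau> (c \<sigma>) * d \<tau> else 0)"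

definition cp_basis :: "('k::field_char_0 \<Rightarrow> 'k) \<Rightarrow> (('k \<Rightarrow> 'k) \<Rightarrow> 'k)" where
  "cp_basis \<sigma> = (\<lambda>\<tau>. if \<tau> = \<sigma> then 1 else 0)"

definition cp_one :: "('k::field_char_0 \<Rightarrow> 'k) \<Rightarrow> 'k" where
  "cp_one = cp_basis id"

definition cp_emb :: "'k::field_char_0 \<Rightarrow> (('k \<Rightarrow> 'k) \<Rightarrow> 'k)" where
  "cp_emb k = (\<lambda>\<tau>. if \<tau> = id then k else 0)"

definition cp_f :: "(('k::field_char_0 \<Rightarrow> 'k) \<Rightarrow> 'k) \<Rightarrow> 'k" where
  "cp_f c = c id"

definition is_division_cp :: "('k::field_char_0 \<Rightarrow> 'k) set \<Rightarrow> (('k \<Rightarrow> 'k) \<Rightarrow> ('k \<Rightarrow> 'k) \<Rightarrow> 'k) \<Rightarrow> bool" where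
  "is_division_cp G \<Phi> \<longleftrightarrow> (\<forall>a\<in>cp_carrier G. a \<noteq> cp_zero \<longrightarrow>
      (\<exists>b\<in>cp_carrier G. cp_mult G \<Phi> a b = cp_one \<and> cp_mult G \<Phi> b a = cp_one))"

definition is_involution_cp :: "('k::field_char_0 \<Rightarrow> 'k) set \<Rightarrow> (('k \<Rightarrow> 'k) \<Rightarrow> ('k \<Rightarrow> 'k) \<Rightarrow> 'k)
    \<Rightarrow> ((('k \<Rightarrow> 'k) \<Rightarrow> 'k) \<Rightarrow> (('k \<Rightarrow> 'k) \<Rightarrow> 'k)) \<Rightarrow> bool" where
  "is_involution_cp G \<Phi> star \<longleftrightarrow>
     (\<forall>a\<in>cp_carrier G. star a \<in> cp_carrier G)
   \<and> (\<forall>a\<in>cp_carrier G. \<forall>b\<in>cp_carrier G. star (cp_add a b) = cp_add (star a) (star b))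
   \<and> (\<forall>a\<in>cp_carrier G. \<forall>b\<in>cp_carrier G. star (cp_mult G \<Phi> a b) = cp_mult G \<Phi> (star b) (star a))
   \<and> (\<forall>a\<in>cp_carrier G. star (star a) = a)"

text \<open>restriction of * to K (meaningful when K* is contained in K)\<close>
definition kstar :: "((('k::field_char_0 \<Rightarrow> 'k) \<Rightarrow> 'k) \<Rightarrow> (('k \<Rightarrow> 'k) \<Rightarrow> 'k)) \<Rightarrow> 'k \<Rightarrow> 'k" where
  "kstar star k = cp_f (star (cp_emb k))"

definition formally_real_cp :: "('k::field_char_0 \<Rightarrow> 'k) set \<Rightarrow> (('k \<Rightarrow> 'k) \<Rightarrow> ('k \<Rightarrow> 'k) \<Rightarrow> 'k)
    \<Rightarrow> ((('k \<Rightarrow> 'k) \<Rightarrow> 'k) \<Rightarrow> (('k \<Rightarrow> 'k) \<Rightarrow> 'k)) \<Rightarrow> bool" where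
  "formally_real_cp G \<Phi> star \<longleftrightarrow> (\<forall>(m::nat) r. (\<forall>i<m. r i \<in> cp_carrier G) \<longrightarrow>
      (\<forall>\<rho>. (\<Sum>i<m. cp_mult G \<Phi> (r i) (star (r i)) \<rho>) = 0) \<longrightarrow> (\<forall>i<m. r i = cp_zero))"

text \<open>Matrices in M_n(K), rows and columns indexed by G (entries zero outside G x G).\<close>

definition mat_carrier :: "('k::field_char_0 \<Rightarrow> 'k) set \<Rightarrow> (('k \<Rightarrow> 'k) \<Rightarrow> ('k \<Rightarrow> 'k) \<Rightarrow> 'k) set" where
  "mat_carrier G = {X. \<forall>\<sigma> \<tau>. (\<sigma> \<notin> G \<or> \<tau> \<notin> G) \<longrightarrow> X \<sigma> \<tau> = 0}"

definition mat_mult :: "('k::field_char_0 \<Rightarrow> 'k) set \<Rightarrow> (('k \<Rightarrow> 'k) \<Rightarrow> ('k \<Rightarrow> 'k) \<Rightarrow> 'k)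
    \<Rightarrow> (('k \<Rightarrow> 'k) \<Rightarrow> ('k \<Rightarrow> 'k) \<Rightarrow> 'k) \<Rightarrow> (('k \<Rightarrow> 'k) \<Rightarrow> ('k \<Rightarrow> 'k) \<Rightarrow> 'k)" where
  "mat_mult G X Y = (\<lambda>\<sigma> \<tau>. \<Sum>\<rho>\<in>G. X \<sigma> \<rho> * Y \<rho> \<tau>)"

definition mat_one :: "('k::field_char_0 \<Rightarrow> 'k) set \<Rightarrow> (('k \<Rightarrow> 'k) \<Rightarrow> ('k \<Rightarrow> 'k) \<Rightarrow> 'k)" where
  "mat_one G = (\<lambda>\<sigma> \<tau>. if \<sigma> \<in> G \<and> \<sigma> = \<tau> then 1 else 0)"

definition mat_inv :: "('k::field_char_0 \<Rightarrow> 'k) set \<Rightarrow> (('k \<Rightarrow> 'k) \<Rightarrow> ('k \<Rightarrow> 'k) \<Rightarrow> 'k)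
    \<Rightarrow> (('k \<Rightarrow> 'k) \<Rightarrow> ('k \<Rightarrow> 'k) \<Rightarrow> 'k)" where
  "mat_inv G A = (THE B. B \<in> mat_carrier G \<and> mat_mult G A B = mat_one G \<and> mat_mult G B A = mat_one G)"

definition mat_conj :: "('k::field_char_0 \<Rightarrow> 'k) set \<Rightarrow> ((('k \<Rightarrow> 'k) \<Rightarrow> 'k) \<Rightarrow> (('k \<Rightarrow> 'k) \<Rightarrow> 'k))
    \<Rightarrow> (('k \<Rightarrow> 'k) \<Rightarrow> ('k \<Rightarrow> 'k) \<Rightarrow> 'k) \<Rightarrow> (('k \<Rightarrow> 'k) \<Rightarrow> ('k \<Rightarrow> 'k) \<Rightarrow> 'k)" where
  "mat_conj G star X = (\<lambda>\<sigma> \<tau>. if \<sigma> \<in> G \<and> \<tau> \<in> G then kstar star (X \<tau> \<sigma>) else 0)"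

definition gram :: "('k::field_char_0 \<Rightarrow> 'k) set \<Rightarrow> (('k \<Rightarrow> 'k) \<Rightarrow> ('k \<Rightarrow> 'k) \<Rightarrow> 'k)
    \<Rightarrow> ((('k \<Rightarrow> 'k) \<Rightarrow> 'k) \<Rightarrow> (('k \<Rightarrow> 'k) \<Rightarrow> 'k)) \<Rightarrow> (('k \<Rightarrow> 'k) \<Rightarrow> ('k \<Rightarrow> 'k) \<Rightarrow> 'k)" where
  "gram G \<Phi> star = (\<lambda>\<sigma> \<tau>. if \<sigma> \<in> G \<and> \<tau> \<in> G
      then cp_f (cp_mult G \<Phi> (star (cp_basis \<sigma>)) (cp_basis \<tau>)) else 0)"

definition mat_sharp :: "('k::field_char_0 \<Rightarrow> 'k) set \<Rightarrow> (('k \<Rightarrow> 'k) \<Rightarrow> ('k \<Rightarrow> 'k) \<Rightarrow> 'k)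
    \<Rightarrow> ((('k \<Rightarrow> 'k) \<Rightarrow> 'k) \<Rightarrow> (('k \<Rightarrow> 'k) \<Rightarrow> 'k))
    \<Rightarrow> (('k \<Rightarrow> 'k) \<Rightarrow> ('k \<Rightarrow> 'k) \<Rightarrow> 'k) \<Rightarrow> (('k \<Rightarrow> 'k) \<Rightarrow> ('k \<Rightarrow> 'k) \<Rightarrow> 'k)" where
  "mat_sharp G \<Phi> star X =
     mat_mult G (mat_mult G (mat_inv G (gram G \<Phi> star)) (mat_conj G star X)) (gram G \<Phi> star)"

definition formally_real_mat :: "('k::field_char_0 \<Rightarrow> 'k) set \<Rightarrow> (('k \<Rightarrow> 'k) \<Rightarrow> ('k \<Rightarrow> 'k) \<Rightarrow> 'k)
    \<Rightarrow> ((('k \<Rightarrow> 'k) \<Rightarrow> 'k) \<Rightarrow> (('k \<Rightarrow> 'k) \<Rightarrow> 'k)) \<Rightarrow> bool" where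
  "formally_real_mat G \<Phi> star \<longleftrightarrow> (\<forall>(m::nat) r. (\<forall>i<m. r i \<in> mat_carrier G) \<longrightarrow>
      (\<forall>\<sigma> \<tau>. (\<Sum>i<m. mat_mult G (r i) (mat_sharp G \<Phi> star (r i)) \<sigma> \<tau>) = 0) \<longrightarrow>
      (\<forall>i<m. r i = (\<lambda>_ _. 0)))"

definition herm_cone :: "('k::field_char_0 \<Rightarrow> 'k) \<Rightarrow> 'k set \<Rightarrow> bool" where
  "herm_cone kst M \<longleftrightarrow> M \<subseteq> {r. kst r = r} \<and> 1 \<in> M \<and> (\<forall>x\<in>M. \<forall>y\<in>M. x + y \<in> M)
     \<and> (\<forall>a. \<forall>x\<in>M. a * x * kst a \<in> M) \<and> (\<forall>x. x \<in> M \<and> - x \<in> M \<longrightarrow> x = 0)"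

end

theory Submission
  imports Defs
begin
definition mono_cp :: "('k \<Rightarrow> 'k) \<Rightarrow> 'k::zero \<Rightarrow> (('k \<Rightarrow> 'k) \<Rightarrow> 'k)" where
  "mono_cp \<sigma> d = (\<lambda>x. if x = \<sigma> then d else 0)"

lemma basis_mono: "cp_basis \<sigma> = mono_cp \<sigma> 1" by (simp add: cp_basis_def mono_cp_def)
lemma emb_mono: "cp_emb k = mono_cp id k" by (simp add: cp_emb_def mono_cp_def fun_eq_iff)
lemma one_mono: "cp_one = mono_cp id 1" by (simp add: cp_one_def basis_mono)

lemma cone_zero:
  assumes "herm_cone kst M" "finite I" "\<forall>j\<in>I. t j \<in> M" "(\<Sum>j\<in>I. t j) = 0"
  shows "\<forall>j\<in>I. t j = 0"
proof -
  have z: "0 \<in> M" using assms(1) unfolding herm_cone_def by (metis mult_zero_left)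
  have add: "\<And>x y. x \<in> M \<Longrightarrow> y \<in> M \<Longrightarrow> x + y \<in> M" using assms(1) unfolding herm_cone_def by blast
  have sumM: "\<And>J. J \<subseteq> I \<Longrightarrow> (\<Sum>j\<in>J. t j) \<in> M"
  proof -
    fix J assume "J \<subseteq> I"
    then have "finite J" using assms(2) finite_subset by blast
    then show "(\<Sum>j\<in>J. t j) \<in> M" using \<open>J \<subseteq> I\<close>
    proof (induct J rule: finite_induct)
      case empty then show ?case using z by simp
    next
      case (insert x F) then show ?case using add assms(3) by auto
    qed
  qed
  show ?thesis
  proof
    fix j assume j: "j \<in> I"
    have "(\<Sum>j\<in>I. t j) = t j + (\<Sum>i\<in>I-{j}. t i)"
      using j assms(2) by (simp add: sum.remove)
    then have "- t j = (\<Sum>i\<in>I-{j}. t i)" using assms(4) by (metis add_eq_0_iff)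
    then have "- t j \<in> M" using sumM[of "I-{j}"] by auto
    then show "t j = 0" using assms(3) j assms(1) unfolding herm_cone_def by blast
  qed
qed

lemma mat_assoc:
  assumes "finite G"
  shows "mat_mult G (mat_mult G X Y) Z = mat_mult G X (mat_mult G Y Z)"
  unfolding mat_mult_def
  by (auto simp: fun_eq_iff sum_distrib_left sum_distrib_right mult.assoc intro: sum.swap)

lemma mat_one_left: "X \<in> mat_carrier G \<Longrightarrow> finite G \<Longrightarrow> mat_mult G (mat_one G) X = X"
  unfolding mat_mult_def mat_one_def mat_carrier_def
  apply (intro ext)
  subgoal for \<sigma> \<tau> by (cases "\<sigma> \<in> G") (simp_all add: if_distrib[of "\<lambda>x. x * _"] sum.delta sum.delta' cong: if_cong)
  done

lemma mat_one_right: "X \<in> mat_carrier G \<Longrightarrow> finite G \<Longrightarrow> mat_mult G X (mat_one G) = X"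
  unfolding mat_mult_def mat_one_def mat_carrier_def
  apply (intro ext)
  subgoal for \<sigma> \<tau> by (cases "\<tau> \<in> G") (auto simp add: if_distrib[of "\<lambda>x. _ * x"] sum.delta sum.delta' cong: if_cong)
  done

lemma mat_inv_eq:
  assumes "finite G" "B \<in> mat_carrier G" "mat_mult G A B = mat_one G" "mat_mult G B A = mat_one G"
  shows "mat_inv G A = B"
  unfolding mat_inv_def
proof (rule the_equality)
  show "B \<in> mat_carrier G \<and> mat_mult G A B = mat_one G \<and> mat_mult G B A = mat_one G" using assms by auto
  fix B' assume B': "B' \<in> mat_carrier G \<and> mat_mult G A B' = mat_one G \<and> mat_mult G B' A = mat_one G"
  have "B' = mat_mult G B' (mat_mult G A B)" using assms B' mat_one_right by metis
  also have "\<dots> = mat_mult G (mat_mult G B' A) B" using mat_assoc assms by metis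
  also have "\<dots> = B" using B' assms mat_one_left by metis
  finally show "B' = B" .
qed

lemma diag_left:
  "finite G \<Longrightarrow> mat_mult G (\<lambda>\<alpha> \<beta>. if \<alpha> \<in> G \<and> \<alpha> = \<beta> then d \<alpha> else 0) Y = (\<lambda>\<alpha> \<beta>. if \<alpha> \<in> G then d \<alpha> * Y \<alpha> \<beta> else 0)"
  unfolding mat_mult_def apply (intro ext)
  by (simp add: if_distrib[of "\<lambda>x. x * _"] sum.delta sum.delta' cong: if_cong)

lemma diag_right:
  "finite G \<Longrightarrow> mat_mult G Y (\<lambda>\<alpha> \<beta>. if \<alpha> \<in> G \<and> \<alpha> = \<beta> then d \<alpha> else 0) = (\<lambda>\<alpha> \<beta>. if \<beta> \<in> G then Y \<alpha> \<beta> * d \<beta> else 0)"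
  unfolding mat_mult_def apply (intro ext)
  by (simp add: if_distrib[of "\<lambda>x. _ * x"] sum.delta sum.delta' cong: if_cong)

lemma sum_concat: "(\<Sum>j<m1+(m2::nat). f j) = (\<Sum>j<m1. f j) + (\<Sum>j<m2. f (m1 + j))"
  by (induct m2) (simp_all add: add.assoc)

locale cpx =
  fixes G :: "('k::field_char_0 \<Rightarrow> 'k) set"
    and \<Phi> :: "('k \<Rightarrow> 'k) \<Rightarrow> ('k \<Rightarrow> 'k) \<Rightarrow> 'k"
    and star :: "(('k \<Rightarrow> 'k) \<Rightarrow> 'k) \<Rightarrow> (('k \<Rightarrow> 'k) \<Rightarrow> 'k)"
  assumes gg: "galois_group G"
    and nc: "normalized_cocycle G \<Phi>"
    and invo: "is_involution_cp G \<Phi> star"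
    and kk: "\<forall>k. star (cp_emb k) \<in> range cp_emb"
begin

abbreviation "kst \<equiv> kstar star"
abbreviation "mult \<equiv> cp_mult G \<Phi>"
abbreviation "carr \<equiv> cp_carrier G"

lemma finG: "finite G" using gg by (simp add: galois_group_def)
lemma idG: "id \<in> G" using gg by (simp add: galois_group_def)
lemma compG: "\<sigma> \<in> G \<Longrightarrow> \<tau> \<in> G \<Longrightarrow> \<tau> \<circ> \<sigma> \<in> G" using gg by (simp add: galois_group_def)
lemma invG: "\<sigma> \<in> G \<Longrightarrow> inv \<sigma> \<in> G" using gg by (simp add: galois_group_def)
lemma bijG: "\<sigma> \<in> G \<Longrightarrow> bij \<sigma>" using gg by (simp add: galois_group_def)
lemma addG: "\<sigma> \<in> G \<Longrightarrow> \<sigma> (x + y) = \<sigma> x + \<sigma> y" using gg by (simp add: galois_group_def)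
lemma mulG: "\<sigma> \<in> G \<Longrightarrow> \<sigma> (x * y) = \<sigma> x * \<sigma> y" using gg by (simp add: galois_group_def)
lemma oneG: "\<sigma> \<in> G \<Longrightarrow> \<sigma> 1 = 1" using gg by (simp add: galois_group_def)
lemma zeroG: "\<sigma> \<in> G \<Longrightarrow> \<sigma> 0 = 0" using addG[of \<sigma> 0 0] by simp
lemma injG: "\<sigma> \<in> G \<Longrightarrow> \<sigma> x = \<sigma> y \<longleftrightarrow> x = y" using bijG bij_is_inj by (metis injD)
lemma eq0G: "\<sigma> \<in> G \<Longrightarrow> \<sigma> x = 0 \<longleftrightarrow> x = 0" using injG zeroG by metis
lemma sumG: "\<sigma> \<in> G \<Longrightarrow> \<sigma> (\<Sum>i\<in>S. f i) = (\<Sum>i\<in>S. \<sigma> (f i))"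
  by (induct S rule: infinite_finite_induct) (auto simp: zeroG addG)
lemma inv_right: "\<sigma> \<in> G \<Longrightarrow> \<sigma> (inv \<sigma> x) = x" using bijG by (meson bij_inv_eq_iff)
lemma inv_left: "\<sigma> \<in> G \<Longrightarrow> inv \<sigma> (\<sigma> x) = x" using bijG bij_is_inj inv_f_f by metis

lemma Phi_id1: "\<sigma> \<in> G \<Longrightarrow> \<Phi> id \<sigma> = 1" using nc by (simp add: normalized_cocycle_def)
lemma Phi_id2: "\<sigma> \<in> G \<Longrightarrow> \<Phi> \<sigma> id = 1" using nc by (simp add: normalized_cocycle_def)
lemma Phi_nz: "\<sigma> \<in> G \<Longrightarrow> \<tau> \<in> G \<Longrightarrow> \<Phi> \<sigma> \<tau> \<noteq> 0" using nc by (simp add: normalized_cocycle_def)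

lemma star_carr: "a \<in> carr \<Longrightarrow> star a \<in> carr" using invo by (simp add: is_involution_cp_def)
lemma star_add: "a \<in> carr \<Longrightarrow> b \<in> carr \<Longrightarrow> star (cp_add a b) = cp_add (star a) (star b)"
  using invo by (simp add: is_involution_cp_def)
lemma star_mult: "a \<in> carr \<Longrightarrow> b \<in> carr \<Longrightarrow> star (mult a b) = mult (star b) (star a)"
  using invo by (simp add: is_involution_cp_def)
lemma star_star: "a \<in> carr \<Longrightarrow> star (star a) = a" using invo by (simp add: is_involution_cp_def)

lemma mono_carr: "\<sigma> \<in> G \<Longrightarrow> mono_cp \<sigma> d \<in> carr" by (auto simp: mono_cp_def cp_carrier_def)
lemma zero_carr: "cp_zero \<in> carr" by (simp add: cp_zero_def cp_carrier_def)
lemma emb_carr: "cp_emb k \<in> carr" by (simp add: emb_mono mono_carr idG)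
lemma basis_carr: "\<sigma> \<in> G \<Longrightarrow> cp_basis \<sigma> \<in> carr" by (simp add: basis_mono mono_carr)

lemma star_zero: "star cp_zero = cp_zero"
proof -
  have "cp_add cp_zero cp_zero = cp_zero" by (simp add: cp_add_def cp_zero_def)
  then have "star cp_zero = cp_add (star cp_zero) (star cp_zero)" using star_add zero_carr by metis
  then show ?thesis by (auto simp: cp_add_def cp_zero_def fun_eq_iff)
qed

lemma star_eq_zero: "a \<in> carr \<Longrightarrow> star a = cp_zero \<longleftrightarrow> a = cp_zero"
  using star_star star_zero by metis

lemma double_delta:
  assumes "finite S" "finite T"
  shows "(\<Sum>x\<in>S. \<Sum>y\<in>T. if x = a \<and> y = b then c else 0) = (if a \<in> S \<and> b \<in> T then c else 0)"
proof -
  have "\<And>x. (\<Sum>y\<in>T. if x = a \<and> y = b then c else 0) = (if x = a then (if b \<in> T then c else 0) else 0)"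
    subgoal for x by (cases "x = a") (simp_all add: sum.delta' assms)
    done
  then show ?thesis using assms by (simp add: sum.delta')
qed

lemma mult_mono_mono:
  assumes "\<sigma> \<in> G" "\<tau> \<in> G"
  shows "mult (mono_cp \<sigma> a) (mono_cp \<tau> b) = mono_cp (gmul \<sigma> \<tau>) (\<Phi> \<sigma> \<tau> * \<tau> a * b)"
proof (rule ext)
  fix \<rho>
  have "mult (mono_cp \<sigma> a) (mono_cp \<tau> b) \<rho> = (\<Sum>x\<in>G. \<Sum>y\<in>G.
      if x = \<sigma> \<and> y = \<tau> then (if gmul \<sigma> \<tau> = \<rho> then \<Phi> \<sigma> \<tau> * \<tau> a * b else 0) else 0)"
    unfolding cp_mult_def mono_cp_def
    by (intro sum.cong refl) (auto simp: zeroG)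
  also have "\<dots> = mono_cp (gmul \<sigma> \<tau>) (\<Phi> \<sigma> \<tau> * \<tau> a * b) \<rho>"
    using assms finG by (simp add: double_delta mono_cp_def)
  finally show "mult (mono_cp \<sigma> a) (mono_cp \<tau> b) \<rho> = mono_cp (gmul \<sigma> \<tau>) (\<Phi> \<sigma> \<tau> * \<tau> a * b) \<rho>" .
qed

lemma mult_right_emb:
  assumes "a \<in> carr"
  shows "mult a (cp_emb k) = (\<lambda>\<rho>. a \<rho> * k)"
proof (rule ext)
  fix \<rho>
  have "mult a (cp_emb k) \<rho> = (\<Sum>x\<in>G. \<Sum>y\<in>G. if x = \<rho> \<and> y = id then a \<rho> * k else 0)"
    unfolding cp_mult_def cp_emb_def
    by (intro sum.cong refl) (auto simp: gmul_def Phi_id2)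
  also have "\<dots> = a \<rho> * k" using assms finG idG by (auto simp: double_delta cp_carrier_def)
  finally show "mult a (cp_emb k) \<rho> = a \<rho> * k" .
qed

lemma mult_left_emb:
  assumes "a \<in> carr"
  shows "mult (cp_emb k) a = (\<lambda>\<rho>. \<rho> k * a \<rho>)"
proof (rule ext)
  fix \<rho>
  have "mult (cp_emb k) a \<rho> = (\<Sum>x\<in>G. \<Sum>y\<in>G. if x = id \<and> y = \<rho> then \<rho> k * a \<rho> else 0)"
    unfolding cp_mult_def cp_emb_def
    by (intro sum.cong refl) (auto simp: gmul_def Phi_id1 zeroG)
  also have "\<dots> = \<rho> k * a \<rho>" using assms finG idG by (auto simp: double_delta cp_carrier_def)
  finally show "mult (cp_emb k) a \<rho> = \<rho> k * a \<rho>" .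
qed

end

context cpx begin

lemma emb_inj: "cp_emb a = cp_emb b \<longleftrightarrow> a = b"
  by (metis cp_emb_def)

lemma star_emb: "star (cp_emb k) = cp_emb (kst k)"
proof -
  obtain j where "star (cp_emb k) = cp_emb j" using kk by blast
  then show ?thesis by (simp add: kstar_def cp_f_def cp_emb_def)
qed

lemma emb_add: "cp_emb (a + b) = cp_add (cp_emb a) (cp_emb b)"
  by (auto simp: cp_emb_def cp_add_def)

lemma emb_mult: "cp_emb (a * b) = mult (cp_emb a) (cp_emb b)"
  using mult_mono_mono[OF idG idG] by (simp add: emb_mono gmul_def Phi_id1 idG)

lemma kst_add: "kst (a + b) = kst a + kst b"
  using star_add[OF emb_carr emb_carr, of a b] by (simp add: star_emb emb_add[symmetric] emb_inj)

lemma kst_mult: "kst (a * b) = kst a * kst b"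
  using star_mult[OF emb_carr emb_carr, of a b] by (simp add: star_emb emb_mult[symmetric] emb_inj mult.commute)

lemma kst_kst: "kst (kst a) = a"
  using star_star[OF emb_carr, of a] by (simp add: star_emb emb_inj)

lemma kst_zero: "kst 0 = 0" using kst_add[of 0 0] by simp

lemma kst_one: "kst 1 = 1"
  using kst_mult[of 1 "kst 1"] by (simp add: kst_kst)

lemma kst_eq0: "kst a = 0 \<longleftrightarrow> a = 0" using kst_kst kst_zero by metis

lemma kst_minus: "kst (- a) = - kst a"
  using kst_add[of a "-a"] kst_zero by (metis neg_eq_iff_add_eq_0 add.right_inverse)

lemma kst_inverse: "kst (inverse a) = inverse (kst a)"
proof (cases "a = 0")
  case True then show ?thesis by (simp add: kst_zero)
next
  case False
  then have "kst a * kst (inverse a) = 1" using kst_mult[of a "inverse a"] by (simp add: kst_one)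
  then show ?thesis by (metis inverse_unique)
qed

lemma kst_sum: "kst (\<Sum>i\<in>S. f i) = (\<Sum>i\<in>S. kst (f i))"
  by (induct S rule: infinite_finite_induct) (auto simp: kst_zero kst_add)

lemma star_one: "star cp_one = cp_one"
  using star_emb[of 1] by (simp add: kst_one cp_one_def cp_emb_def cp_basis_def)

lemma comm_rel:
  assumes "\<sigma> \<in> G"
  shows "star (cp_basis \<sigma>) \<rho> * kst k = \<rho> (kst (\<sigma> k)) * star (cp_basis \<sigma>) \<rho>"
proof -
  have e: "mult (cp_emb k) (cp_basis \<sigma>) = mult (cp_basis \<sigma>) (cp_emb (\<sigma> k))"
    using mult_mono_mono[OF idG assms] mult_mono_mono[OF assms idG] assms
    by (simp add: emb_mono basis_mono gmul_def Phi_id1 Phi_id2 oneG)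
  have "mult (star (cp_basis \<sigma>)) (cp_emb (kst k)) = mult (cp_emb (kst (\<sigma> k))) (star (cp_basis \<sigma>))"
    using arg_cong[OF e, of star] star_mult basis_carr[OF assms] emb_carr by (simp add: star_emb)
  then show ?thesis
    using star_carr[OF basis_carr[OF assms]] by (simp add: mult_right_emb mult_left_emb fun_eq_iff)
qed

lemma rel_nz:
  assumes "\<sigma> \<in> G" "star (cp_basis \<sigma>) \<rho> \<noteq> 0"
  shows "kst k = \<rho> (kst (\<sigma> k))"
  using comm_rel[OF assms(1), of \<rho> k] assms(2) by (simp add: mult.commute)

lemma supp_unique:
  assumes "\<sigma> \<in> G" "star (cp_basis \<sigma>) \<rho> \<noteq> 0" "star (cp_basis \<sigma>) \<rho>' \<noteq> 0"
  shows "\<rho> = \<rho>'"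
proof (rule ext)
  fix x
  let ?k = "inv \<sigma> (kst x)"
  have "kst (\<sigma> ?k) = x" using assms(1) by (simp add: inv_right kst_kst)
  then show "\<rho> x = \<rho>' x" using rel_nz[OF assms(1,2), of ?k] rel_nz[OF assms(1,3), of ?k] by simp
qed

definition rho where "rho \<sigma> = (SOME \<rho>. star (cp_basis \<sigma>) \<rho> \<noteq> 0)"
definition dd where "dd \<sigma> = star (cp_basis \<sigma>) (rho \<sigma>)"

lemma rho_ex:
  assumes "\<sigma> \<in> G" shows "star (cp_basis \<sigma>) (rho \<sigma>) \<noteq> 0"
proof -
  have "star (cp_basis \<sigma>) \<noteq> cp_zero"
    using star_eq_zero[OF basis_carr[OF assms]] by (auto simp: cp_basis_def cp_zero_def fun_eq_iff)
  then obtain \<rho> where "star (cp_basis \<sigma>) \<rho> \<noteq> 0" by (auto simp: cp_zero_def)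
  then show ?thesis unfolding rho_def by (metis (mono_tags, lifting) someI)
qed

lemma dd_nz: "\<sigma> \<in> G \<Longrightarrow> dd \<sigma> \<noteq> 0" using rho_ex dd_def by simp

lemma rhoG: "\<sigma> \<in> G \<Longrightarrow> rho \<sigma> \<in> G"
  using rho_ex star_carr[OF basis_carr] by (auto simp: cp_carrier_def)

lemma star_basis: "\<sigma> \<in> G \<Longrightarrow> star (cp_basis \<sigma>) = mono_cp (rho \<sigma>) (dd \<sigma>)"
  using rho_ex supp_unique by (fastforce simp: mono_cp_def dd_def)

lemma rho_rel: "\<sigma> \<in> G \<Longrightarrow> kst k = rho \<sigma> (kst (\<sigma> k))"
  using rel_nz rho_ex by blast

lemma rho_id: "rho id = id \<and> dd id = 1"
proof -
  have "star (cp_basis id) = mono_cp id 1" using star_one by (simp add: cp_one_def basis_mono)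
  then have "mono_cp (rho id) (dd id) = mono_cp id 1" using star_basis idG by simp
  then show ?thesis using dd_nz[OF idG] by (metis mono_cp_def)
qed

lemma star_mono:
  assumes "\<sigma> \<in> G"
  shows "star (mono_cp \<sigma> b) = mono_cp (rho \<sigma>) (rho \<sigma> (kst b) * dd \<sigma>)"
proof -
  have "mono_cp \<sigma> b = mult (cp_basis \<sigma>) (cp_emb b)"
    using mult_mono_mono[OF assms idG] assms by (simp add: emb_mono basis_mono gmul_def Phi_id2)
  then have "star (mono_cp \<sigma> b) = mult (star (cp_emb b)) (star (cp_basis \<sigma>))"
    using star_mult basis_carr[OF assms] emb_carr by simp
  also have "\<dots> = mult (mono_cp id (kst b)) (mono_cp (rho \<sigma>) (dd \<sigma>))"
    by (simp only: star_emb star_basis[OF assms]) (simp only: emb_mono)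
  also have "\<dots> = mono_cp (rho \<sigma>) (rho \<sigma> (kst b) * dd \<sigma>)"
    using mult_mono_mono[OF idG rhoG[OF assms]] assms
    by (simp add: gmul_def Phi_id1 rhoG)
  finally show ?thesis .
qed

end

context cpx begin

lemma if_sum: "(if P then (\<Sum>i\<in>S. f i) else 0) = (\<Sum>i\<in>S. if P then f i else 0)"
  by simp

lemma mult_sum_left:
  assumes "finite S"
  shows "mult (\<lambda>\<rho>. \<Sum>i\<in>S. t i \<rho>) d = (\<lambda>\<rho>. \<Sum>i\<in>S. mult (t i) d \<rho>)"
proof (rule ext)
  fix \<rho>
  have "mult (\<lambda>\<rho>. \<Sum>i\<in>S. t i \<rho>) d \<rho> = (\<Sum>x\<in>G. \<Sum>y\<in>G. \<Sum>i\<in>S.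
        if gmul x y = \<rho> then \<Phi> x y * y (t i x) * d y else 0)"
    unfolding cp_mult_def
    by (intro sum.cong refl) (simp add: sumG sum_distrib_left sum_distrib_right del: if_sum)
  also have "\<dots> = (\<Sum>x\<in>G. \<Sum>i\<in>S. \<Sum>y\<in>G. if gmul x y = \<rho> then \<Phi> x y * y (t i x) * d y else 0)"
    by (intro sum.cong refl sum.swap)
  also have "\<dots> = (\<Sum>i\<in>S. mult (t i) d \<rho>)"
    unfolding cp_mult_def by (rule sum.swap)
  finally show "mult (\<lambda>\<rho>. \<Sum>i\<in>S. t i \<rho>) d \<rho> = (\<Sum>i\<in>S. mult (t i) d \<rho>)" .
qed

lemma mult_sum_right:
  assumes "finite S"
  shows "mult c (\<lambda>\<rho>. \<Sum>i\<in>S. t i \<rho>) = (\<lambda>\<rho>. \<Sum>i\<in>S. mult c (t i) \<rho>)"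
proof (rule ext)
  fix \<rho>
  have "mult c (\<lambda>\<rho>. \<Sum>i\<in>S. t i \<rho>) \<rho> = (\<Sum>x\<in>G. \<Sum>y\<in>G. \<Sum>i\<in>S.
        if gmul x y = \<rho> then \<Phi> x y * y (c x) * t i y else 0)"
    unfolding cp_mult_def
    by (intro sum.cong refl) (simp add: sum_distrib_left del: if_sum)
  also have "\<dots> = (\<Sum>x\<in>G. \<Sum>i\<in>S. \<Sum>y\<in>G. if gmul x y = \<rho> then \<Phi> x y * y (c x) * t i y else 0)"
    by (intro sum.cong refl sum.swap)
  also have "\<dots> = (\<Sum>i\<in>S. mult c (t i) \<rho>)"
    unfolding cp_mult_def by (rule sum.swap)
  finally show "mult c (\<lambda>\<rho>. \<Sum>i\<in>S. t i \<rho>) \<rho> = (\<Sum>i\<in>S. mult c (t i) \<rho>)" .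
qed

lemma sum_carr: "(\<forall>i\<in>S. t i \<in> carr) \<Longrightarrow> (\<lambda>\<rho>. \<Sum>i\<in>S. t i \<rho>) \<in> carr"
  by (auto simp: cp_carrier_def)

lemma star_sum:
  assumes "finite S" "\<forall>i\<in>S. t i \<in> carr"
  shows "star (\<lambda>\<rho>. \<Sum>i\<in>S. t i \<rho>) = (\<lambda>\<rho>. \<Sum>i\<in>S. star (t i) \<rho>)"
  using assms
proof (induct S rule: finite_induct)
  case empty
  then show ?case using star_zero by (simp add: cp_zero_def)
next
  case (insert x F)
  have "(\<lambda>\<rho>. \<Sum>i\<in>insert x F. t i \<rho>) = cp_add (t x) (\<lambda>\<rho>. \<Sum>i\<in>F. t i \<rho>)"
    using insert by (simp add: cp_add_def)
  then have "star (\<lambda>\<rho>. \<Sum>i\<in>insert x F. t i \<rho>) = star (cp_add (t x) (\<lambda>\<rho>. \<Sum>i\<in>F. t i \<rho>))"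
    by simp
  also have "\<dots> = cp_add (star (t x)) (star (\<lambda>\<rho>. \<Sum>i\<in>F. t i \<rho>))"
    using insert sum_carr[of F t] by (intro star_add) auto
  finally have "star (\<lambda>\<rho>. \<Sum>i\<in>insert x F. t i \<rho>) = cp_add (star (t x)) (star (\<lambda>\<rho>. \<Sum>i\<in>F. t i \<rho>))" .
  then show ?case using insert by (simp add: cp_add_def)
qed

lemma decomp: "s \<in> carr \<Longrightarrow> s = (\<lambda>\<rho>. \<Sum>\<sigma>\<in>G. mono_cp \<sigma> (s \<sigma>) \<rho>)"
  by (rule ext) (auto simp: mono_cp_def sum.delta' finG cp_carrier_def)

definition compat where "compat \<longleftrightarrow> (\<forall>k. \<forall>\<sigma>\<in>G. \<sigma> (kst k) = kst (\<sigma> k))"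

lemma compat_iff: "compat \<longleftrightarrow> (\<forall>\<sigma>\<in>G. \<sigma> \<circ> rho \<sigma> = id)"
proof
  assume c: compat
  show "\<forall>\<sigma>\<in>G. \<sigma> \<circ> rho \<sigma> = id"
  proof
    fix \<sigma> assume s: "\<sigma> \<in> G"
    have l: "rho \<sigma> (\<sigma> x) = x" for x
      using rho_rel[OF s, of "kst x"] c s by (simp add: compat_def kst_kst)
    show "\<sigma> \<circ> rho \<sigma> = id"
    proof (rule ext)
      fix x
      have "\<sigma> (rho \<sigma> (\<sigma> (inv \<sigma> x))) = \<sigma> (inv \<sigma> x)" using l by simp
      then show "(\<sigma> \<circ> rho \<sigma>) x = id x" using inv_right[OF s] by simp
    qed
  qed
next
  assume r: "\<forall>\<sigma>\<in>G. \<sigma> \<circ> rho \<sigma> = id"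
  show compat unfolding compat_def
  proof (intro allI ballI)
    fix k \<sigma> assume s: "\<sigma> \<in> G"
    have "\<sigma> (kst k) = \<sigma> (rho \<sigma> (kst (\<sigma> k)))" using rho_rel[OF s] by metis
    then show "\<sigma> (kst k) = kst (\<sigma> k)" using r s by (metis comp_apply id_apply)
  qed
qed

lemma compat_rho:
  assumes "compat" "\<sigma> \<in> G"
  shows "\<sigma> (rho \<sigma> x) = x" "rho \<sigma> (\<sigma> x) = x"
proof -
  show "\<sigma> (rho \<sigma> x) = x" using assms compat_iff by (metis comp_apply id_apply)
  show "rho \<sigma> (\<sigma> x) = x"
    using rho_rel[OF assms(2), of "kst x"] assms by (simp add: compat_def kst_kst)
qed

lemma compat_gm:
  assumes "compat" "\<sigma> \<in> G" "\<tau> \<in> G"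
  shows "\<tau> \<circ> rho \<sigma> = id \<longleftrightarrow> \<tau> = \<sigma>"
proof
  assume h: "\<tau> \<circ> rho \<sigma> = id"
  show "\<tau> = \<sigma>"
  proof (rule ext)
    fix x
    have "\<tau> (rho \<sigma> (\<sigma> x)) = \<sigma> x" using h by (metis comp_apply id_apply)
    then show "\<tau> x = \<sigma> x" using compat_rho[OF assms(1,2)] by simp
  qed
next
  assume "\<tau> = \<sigma>" then show "\<tau> \<circ> rho \<sigma> = id" using compat_iff assms by auto
qed

lemma cpf_mono: "cp_f (mono_cp x v) = (if x = id then v else 0)"
  by (simp add: cp_f_def mono_cp_def)

lemma gram_formula:
  assumes "\<sigma> \<in> G" "\<tau> \<in> G"
  shows "gram G \<Phi> star \<sigma> \<tau> = (if \<tau> \<circ> rho \<sigma> = id then \<Phi> (rho \<sigma>) \<tau> * \<tau> (dd \<sigma>) else 0)"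
proof -
  have "gram G \<Phi> star \<sigma> \<tau> = cp_f (mult (mono_cp (rho \<sigma>) (dd \<sigma>)) (mono_cp \<tau> 1))"
    using assms by (simp only: gram_def star_basis[OF assms(1)] basis_mono[of \<tau>] if_True simp_thms)
  then show ?thesis using assms mult_mono_mono[OF rhoG[OF assms(1)] assms(2)]
    by (simp add: cpf_mono gmul_def)
qed

definition cc where "cc \<sigma> = \<Phi> (rho \<sigma>) \<sigma> * \<sigma> (dd \<sigma>)"

lemma cc_nz: "\<sigma> \<in> G \<Longrightarrow> cc \<sigma> \<noteq> 0"
  by (simp add: cc_def Phi_nz rhoG eq0G dd_nz)

lemma gram_compat:
  assumes "compat"
  shows "gram G \<Phi> star = (\<lambda>\<sigma> \<tau>. if \<sigma> \<in> G \<and> \<sigma> = \<tau> then cc \<sigma> else 0)"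
proof (intro ext)
  fix \<sigma> \<tau>
  show "gram G \<Phi> star \<sigma> \<tau> = (if \<sigma> \<in> G \<and> \<sigma> = \<tau> then cc \<sigma> else 0)"
  proof (cases "\<sigma> \<in> G \<and> \<tau> \<in> G")
    case True
    then show ?thesis using gram_formula compat_gm[OF assms] by (auto simp: cc_def)
  next
    case False
    then show ?thesis by (auto simp: gram_def)
  qed
qed

lemma E_lemma:
  assumes "compat" "\<sigma> \<in> G"
  shows "mult (star (mono_cp \<sigma> b)) (mono_cp \<sigma> b) = cp_emb (kst b * cc \<sigma> * b)"
  using mult_mono_mono[OF rhoG[OF assms(2)] assms(2)] assms compat_iff compat_rho[OF assms]
  by (simp add: star_mono emb_mono gmul_def cc_def mulG rhoG mult.commute mult.left_commute)

lemma cc_basis: "compat \<Longrightarrow> \<sigma> \<in> G \<Longrightarrow> mult (star (cp_basis \<sigma>)) (cp_basis \<sigma>) = cp_emb (cc \<sigma>)"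
  using E_lemma[of \<sigma> 1] by (simp add: basis_mono kst_one)

lemma cc_herm:
  assumes "compat" "\<sigma> \<in> G" shows "kst (cc \<sigma>) = cc \<sigma>"
proof -
  have "star (mult (star (cp_basis \<sigma>)) (cp_basis \<sigma>)) = mult (star (cp_basis \<sigma>)) (cp_basis \<sigma>)"
    using star_mult star_star basis_carr[OF assms(2)] star_carr by simp
  then show ?thesis using cc_basis[OF assms] by (simp add: star_emb emb_inj)
qed

lemma key_lemma:
  assumes "compat" "s \<in> carr"
  shows "cp_f (mult (star s) s) = (\<Sum>\<sigma>\<in>G. kst (s \<sigma>) * cc \<sigma> * s \<sigma>)"
proof -
  let ?v = "\<lambda>\<sigma>. rho \<sigma> (kst (s \<sigma>)) * dd \<sigma>"
  have ss: "star s = (\<lambda>\<rho>. \<Sum>\<sigma>\<in>G. mono_cp (rho \<sigma>) (?v \<sigma>) \<rho>)"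
    using star_sum[OF finG, of "\<lambda>\<sigma>. mono_cp \<sigma> (s \<sigma>)"] decomp[OF assms(2)] mono_carr
    by (simp add: star_mono)
  have "mult (star s) s = (\<lambda>\<rho>. \<Sum>\<sigma>\<in>G. mult (mono_cp (rho \<sigma>) (?v \<sigma>)) s \<rho>)"
    unfolding ss by (rule mult_sum_left[OF finG])
  also have "\<dots> = (\<lambda>\<rho>. \<Sum>\<sigma>\<in>G. \<Sum>\<tau>\<in>G. mult (mono_cp (rho \<sigma>) (?v \<sigma>)) (mono_cp \<tau> (s \<tau>)) \<rho>)"
  proof -
    have ms: "mult c s = (\<lambda>\<rho>. \<Sum>\<tau>\<in>G. mult c (mono_cp \<tau> (s \<tau>)) \<rho>)" for c
      using mult_sum_right[OF finG, of c "\<lambda>\<tau>. mono_cp \<tau> (s \<tau>)"] decomp[OF assms(2), symmetric] by simp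
    show ?thesis by (simp add: ms)
  qed
  finally have "cp_f (mult (star s) s) = (\<Sum>\<sigma>\<in>G. \<Sum>\<tau>\<in>G.
       cp_f (mult (mono_cp (rho \<sigma>) (?v \<sigma>)) (mono_cp \<tau> (s \<tau>))))"
    by (simp add: cp_f_def)
  also have "\<dots> = (\<Sum>\<sigma>\<in>G. \<Sum>\<tau>\<in>G.
       if \<tau> \<circ> rho \<sigma> = id then \<Phi> (rho \<sigma>) \<tau> * \<tau> (?v \<sigma>) * s \<tau> else 0)"
    by (intro sum.cong refl) (simp add: mult_mono_mono rhoG cpf_mono gmul_def)
  also have "\<dots> = (\<Sum>\<sigma>\<in>G. \<Sum>\<tau>\<in>G. if \<tau> = \<sigma> then kst (s \<sigma>) * cc \<sigma> * s \<sigma> else 0)"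
    apply (intro sum.cong refl)
    using compat_gm[OF assms(1)] compat_rho[OF assms(1)]
    by (auto simp: cc_def mulG rhoG mult.commute mult.left_commute)
  also have "\<dots> = (\<Sum>\<sigma>\<in>G. kst (s \<sigma>) * cc \<sigma> * s \<sigma>)"
    by (simp add: sum.delta finG)
  finally show ?thesis .
qed

end

context cpx begin

lemma ee_formula: "\<sigma> \<in> G \<Longrightarrow> mult (star (cp_basis \<sigma>)) (cp_basis \<sigma>) = mono_cp (\<sigma> \<circ> rho \<sigma>) (cc \<sigma>)"
  using mult_mono_mono[OF rhoG] by (simp only: star_basis) (simp add: basis_mono gmul_def cc_def)

lemma impl_d:
  assumes "\<forall>\<sigma>\<in>G. mult (star (cp_basis \<sigma>)) (cp_basis \<sigma>) \<in> range cp_emb"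
  shows compat
  unfolding compat_iff
proof
  fix \<sigma> assume s: "\<sigma> \<in> G"
  have "mult (star (cp_basis \<sigma>)) (cp_basis \<sigma>) \<in> range cp_emb" using assms s by blast
  then obtain j where "mono_cp (\<sigma> \<circ> rho \<sigma>) (cc \<sigma>) = cp_emb j" using ee_formula[OF s] by auto
  then have "mono_cp (\<sigma> \<circ> rho \<sigma>) (cc \<sigma>) (\<sigma> \<circ> rho \<sigma>) = cp_emb j (\<sigma> \<circ> rho \<sigma>)" by simp
  then show "\<sigma> \<circ> rho \<sigma> = id" using cc_nz[OF s] by (auto simp: mono_cp_def cp_emb_def split: if_splits)
qed

lemma pos_term: "herm_cone kst M \<Longrightarrow> c \<in> M \<Longrightarrow> kst x * c * x \<in> M"
  unfolding herm_cone_def by (metis kst_kst)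

lemma impl_e:
  assumes c: compat and hM: "herm_cone kst M" and ccM: "\<forall>\<sigma>\<in>G. cc \<sigma> \<in> M"
  shows "formally_real_cp G \<Phi> star"
  unfolding formally_real_cp_def
proof (rule allI, rule allI, rule impI, rule impI)
  fix m :: nat and r
  assume rc: "\<forall>i<m. r i \<in> carr" and z: "\<forall>\<rho>. (\<Sum>i<m. mult (r i) (star (r i)) \<rho>) = 0"
  define s where "s i = star (r i)" for i
  have sc: "\<forall>i<m. s i \<in> carr" using rc star_carr s_def by simp
  have rs: "\<forall>i<m. mult (r i) (star (r i)) = mult (star (s i)) (s i)" using rc star_star s_def by simp
  have "0 = (\<Sum>i<m. cp_f (mult (star (s i)) (s i)))" using z rs by (simp add: cp_f_def)
  also have "\<dots> = (\<Sum>i<m. \<Sum>\<sigma>\<in>G. kst (s i \<sigma>) * cc \<sigma> * s i \<sigma>)"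
    by (rule sum.cong) (auto simp: key_lemma[OF c] sc)
  also have "\<dots> = (\<Sum>p\<in>{..<m} \<times> G. kst (s (fst p) (snd p)) * cc (snd p) * s (fst p) (snd p))"
    by (simp add: sum.cartesian_product case_prod_beta)
  finally have s0': "0 = (\<Sum>p\<in>{..<m} \<times> G. kst (s (fst p) (snd p)) * cc (snd p) * s (fst p) (snd p))" .
  note s0 = s0'[symmetric]
  have "\<forall>p\<in>{..<m} \<times> G. kst (s (fst p) (snd p)) * cc (snd p) * s (fst p) (snd p) = 0"
    by (rule cone_zero[OF hM _ _ s0]) (use finG ccM pos_term[OF hM] in auto)
  then have "\<forall>i<m. \<forall>\<sigma>\<in>G. s i \<sigma> = 0" using cc_nz by (auto simp: kst_eq0)
  then have "\<forall>i<m. s i = cp_zero" using sc by (auto simp: cp_carrier_def cp_zero_def fun_eq_iff)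
  then show "\<forall>i<m. r i = cp_zero" using s_def star_eq_zero rc by auto
qed

lemma Q_lemma:
  assumes c: compat and fr: "formally_real_cp G \<Phi> star"
    and sg: "\<forall>j<(m::nat). sg j \<in> G" and z: "(\<Sum>j<m. kst (b j) * cc (sg j) * b j) = 0"
  shows "\<forall>j<m. b j = 0"
proof -
  define r where "r j = star (mono_cp (sg j) (b j))" for j
  have rc: "\<forall>j<m. r j \<in> carr" using sg mono_carr star_carr r_def by simp
  have rr: "\<forall>j<m. mult (r j) (star (r j)) = cp_emb (kst (b j) * cc (sg j) * b j)"
    using sg E_lemma[OF c] star_star mono_carr r_def by simp
  have "\<forall>\<rho>. (\<Sum>j<m. mult (r j) (star (r j)) \<rho>) = 0"
  proof
    fix \<rho>
    have "(\<Sum>j<m. mult (r j) (star (r j)) \<rho>) = (\<Sum>j<m. if \<rho> = id then kst (b j) * cc (sg j) * b j else 0)"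
      by (rule sum.cong) (auto simp: rr cp_emb_def)
    also have "\<dots> = 0" using z by (cases "\<rho> = id") auto
    finally show "(\<Sum>j<m. mult (r j) (star (r j)) \<rho>) = 0" .
  qed
  then have "\<forall>j<m. r j = cp_zero" using fr rc unfolding formally_real_cp_def by blast
  then have "\<forall>j<m. mono_cp (sg j) (b j) = cp_zero"
    using star_eq_zero mono_carr sg r_def by auto
  then show ?thesis by (metis cp_zero_def mono_cp_def)
qed

definition Mc where "Mc = {x. \<exists>(m::nat) b sg. (\<forall>j<m. sg j \<in> G) \<and> x = (\<Sum>j<m. kst (b j) * cc (sg j) * b j)}"

lemma Mc_add:
  assumes "x \<in> Mc" "y \<in> Mc"
  shows "\<exists>(m::nat) b sg. (\<forall>j<m. sg j \<in> G) \<and> x + y = (\<Sum>j<m. kst (b j) * cc (sg j) * b j)"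
proof -
  obtain m1 b1 sg1 where 1: "\<forall>j<(m1::nat). sg1 j \<in> G" "x = (\<Sum>j<m1. kst (b1 j) * cc (sg1 j) * b1 j)"
    using assms(1) unfolding Mc_def by blast
  obtain m2 b2 sg2 where 2: "\<forall>j<(m2::nat). sg2 j \<in> G" "y = (\<Sum>j<m2. kst (b2 j) * cc (sg2 j) * b2 j)"
    using assms(2) unfolding Mc_def by blast
  define b where "b j = (if j < m1 then b1 j else b2 (j - m1))" for j
  define sg where "sg j = (if j < m1 then sg1 j else sg2 (j - m1))" for j
  have "\<forall>j<m1+m2. sg j \<in> G" using 1 2 sg_def by auto
  moreover have "x + y = (\<Sum>j<m1+m2. kst (b j) * cc (sg j) * b j)"
    unfolding sum_concat using 1 2 by (simp add: b_def sg_def)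
  ultimately show ?thesis by blast
qed

lemma McI: "\<forall>j<(m::nat). sg j \<in> G \<Longrightarrow> (\<Sum>j<m. kst (b j) * cc (sg j) * b j) \<in> Mc"
  unfolding Mc_def by blast

lemma impl_c:
  assumes c: compat and fr: "formally_real_cp G \<Phi> star"
  shows "herm_cone kst Mc" "\<forall>\<sigma>\<in>G. cc \<sigma> \<in> Mc"
proof -
  show ccM: "\<forall>\<sigma>\<in>G. cc \<sigma> \<in> Mc"
  proof
    fix \<sigma> assume "\<sigma> \<in> G"
    then show "cc \<sigma> \<in> Mc" unfolding Mc_def
      by (intro CollectI exI[of _ 1] exI[of _ "\<lambda>_. 1"] exI[of _ "\<lambda>_. \<sigma>"]) (simp add: kst_one)
  qed
  have cc1: "cc id = 1" using rho_id by (simp add: cc_def Phi_id1 idG)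
  have herm: "kst x = x" if xM: "x \<in> Mc" for x
  proof -
    obtain m b sg where h: "\<forall>j<(m::nat). sg j \<in> G" "x = (\<Sum>j<m. kst (b j) * cc (sg j) * b j)"
      using xM unfolding Mc_def by blast
    have "kst x = (\<Sum>j<m. kst (kst (b j) * cc (sg j) * b j))" by (simp add: h(2) kst_sum)
    also have "\<dots> = x" unfolding h(2)
      by (rule sum.cong) (auto simp: kst_mult kst_kst cc_herm[OF c] h(1) mult.commute)
    finally show ?thesis .
  qed
  have conj: "a * x * kst a \<in> Mc" if xM: "x \<in> Mc" for a x
  proof -
    obtain m b sg where h: "\<forall>j<(m::nat). sg j \<in> G" "x = (\<Sum>j<m. kst (b j) * cc (sg j) * b j)"
      using xM unfolding Mc_def by blast
    have "a * x * kst a = (\<Sum>j<m. a * (kst (b j) * cc (sg j) * b j) * kst a)"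
      by (simp only: h(2) sum_distrib_left sum_distrib_right)
    also have "\<dots> = (\<Sum>j<m. kst (b j * kst a) * cc (sg j) * (b j * kst a))"
      by (rule sum.cong) (simp_all add: kst_mult kst_kst mult_ac)
    finally have "a * x * kst a = (\<Sum>j<m. kst (b j * kst a) * cc (sg j) * (b j * kst a))" .
    then show ?thesis using McI[OF h(1)] by simp
  qed
  have pointed: "x = 0" if xM: "x \<in> Mc" "- x \<in> Mc" for x
  proof -
    obtain m1 b1 sg1 where h1: "\<forall>j<(m1::nat). sg1 j \<in> G" "x = (\<Sum>j<m1. kst (b1 j) * cc (sg1 j) * b1 j)"
      using xM(1) unfolding Mc_def by blast
    obtain m2 b2 sg2 where h2: "\<forall>j<(m2::nat). sg2 j \<in> G" "- x = (\<Sum>j<m2. kst (b2 j) * cc (sg2 j) * b2 j)"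
      using xM(2) unfolding Mc_def by blast
    define b' where "b' j = (if j < m1 then b1 j else b2 (j - m1))" for j
    define sg' where "sg' j = (if j < m1 then sg1 j else sg2 (j - m1))" for j
    have "\<forall>j<m1+m2. sg' j \<in> G" using h1 h2 sg'_def by auto
    moreover have "(\<Sum>j<m1+m2. kst (b' j) * cc (sg' j) * b' j) = 0"
    proof -
      have "(\<Sum>j<m1. kst (b' j) * cc (sg' j) * b' j) = x"
        unfolding h1(2) by (rule sum.cong) (auto simp: b'_def sg'_def)
      moreover have "(\<Sum>j<m2. kst (b' (m1 + j)) * cc (sg' (m1 + j)) * b' (m1 + j)) = - x"
        unfolding h2(2) by (rule sum.cong) (auto simp: b'_def sg'_def)
      ultimately show ?thesis unfolding sum_concat by simp
    qed
    ultimately have "\<forall>j<m1+m2. b' j = 0" using Q_lemma[OF c fr] by blast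
    then have "\<forall>j<m1. b1 j = 0" using b'_def by (metis trans_less_add1)
    then show "x = 0" using h1 by simp
  qed
  show "herm_cone kst Mc"
    unfolding herm_cone_def
  proof (intro conjI allI ballI impI)
    show "Mc \<subseteq> {r. kst r = r}" using herm by auto
    show "1 \<in> Mc" using ccM cc1 idG by force
  next
    fix x y assume "x \<in> Mc" "y \<in> Mc"
    then obtain m b sg where "\<forall>j<(m::nat). sg j \<in> G" "x + y = (\<Sum>j<m. kst (b j) * cc (sg j) * b j)"
      using Mc_add by blast
    then show "x + y \<in> Mc" using McI by metis
  next
    fix a x assume "x \<in> Mc" then show "a * x * kst a \<in> Mc" using conj by blast
  next
    fix x assume "x \<in> Mc \<and> - x \<in> Mc" then show "x = 0" using pointed by blast
  qed
qed

end

context cpx begin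

abbreviation "A \<equiv> gram G \<Phi> star"

definition Bd where "Bd = (\<lambda>\<alpha> \<beta>. if \<alpha> \<in> G \<and> \<alpha> = \<beta> then inverse (cc \<alpha>) else 0)"

lemma mat_inv_compat:
  assumes c: compat
  shows "mat_inv G A = Bd"
proof (rule mat_inv_eq[OF finG])
  show "Bd \<in> mat_carrier G" by (auto simp: Bd_def mat_carrier_def)
  show "mat_mult G A Bd = mat_one G"
    unfolding gram_compat[OF c] diag_left[OF finG]
    by (intro ext) (auto simp: Bd_def mat_one_def cc_nz)
  show "mat_mult G Bd A = mat_one G"
    unfolding gram_compat[OF c] Bd_def diag_left[OF finG]
    by (intro ext) (auto simp: mat_one_def cc_nz)
qed

lemma sharp_compat:
  assumes c: compat
  shows "mat_sharp G \<Phi> star X = (\<lambda>\<alpha> \<beta>. if \<alpha> \<in> G \<and> \<beta> \<in> G then inverse (cc \<alpha>) * kst (X \<beta> \<alpha>) * cc \<beta> else 0)"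
  unfolding mat_sharp_def mat_inv_compat[OF c]
  unfolding gram_compat[OF c] Bd_def diag_left[OF finG] diag_right[OF finG]
  by (intro ext) (auto simp: mat_conj_def)

lemma prod_sharp_compat:
  assumes c: compat
  shows "mat_mult G X (mat_sharp G \<Phi> star X) \<alpha> \<beta> =
     (\<Sum>\<rho>\<in>G. X \<alpha> \<rho> * (if \<beta> \<in> G then inverse (cc \<rho>) * kst (X \<beta> \<rho>) * cc \<beta> else 0))"
  unfolding sharp_compat[OF c] mat_mult_def by (intro sum.cong) auto

lemma inv_cc_M:
  assumes c: compat and hM: "herm_cone kst M" and ccM: "cc \<sigma> \<in> M" and s: "\<sigma> \<in> G"
  shows "inverse (cc \<sigma>) \<in> M"
proof -
  have "inverse (cc \<sigma>) * cc \<sigma> * kst (inverse (cc \<sigma>)) \<in> M"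
    using hM ccM unfolding herm_cone_def by blast
  then show ?thesis using cc_nz[OF s] cc_herm[OF c s] by (simp add: kst_inverse)
qed

lemma impl_f:
  assumes c: compat and hM: "herm_cone kst M" and ccM: "\<forall>\<sigma>\<in>G. cc \<sigma> \<in> M"
  shows "formally_real_mat G \<Phi> star"
  unfolding formally_real_mat_def
proof (rule allI, rule allI, rule impI, rule impI)
  fix m :: nat and r
  assume rc: "\<forall>i<m. r i \<in> mat_carrier G"
    and z: "\<forall>\<sigma> \<tau>. (\<Sum>i<m. mat_mult G (r i) (mat_sharp G \<Phi> star (r i)) \<sigma> \<tau>) = 0"
  have rows: "\<forall>i<m. \<forall>\<rho>\<in>G. r i \<alpha> \<rho> = 0" if a: "\<alpha> \<in> G" for \<alpha>
  proof -
    let ?T = "\<lambda>p. r (fst p) \<alpha> (snd p) * inverse (cc (snd p)) * kst (r (fst p) \<alpha> (snd p))"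
    have "0 = (\<Sum>i<m. mat_mult G (r i) (mat_sharp G \<Phi> star (r i)) \<alpha> \<alpha>)" using z by simp
    also have "\<dots> = (\<Sum>i<m. \<Sum>\<rho>\<in>G. cc \<alpha> * ?T (i, \<rho>))"
      by (intro sum.cong refl) (simp add: prod_sharp_compat[OF c] a mult_ac)
    also have "\<dots> = cc \<alpha> * (\<Sum>p\<in>{..<m} \<times> G. ?T p)"
      by (simp add: sum.cartesian_product sum_distrib_left case_prod_beta)
    finally have "(\<Sum>p\<in>{..<m} \<times> G. ?T p) = 0" using cc_nz[OF a] by simp
    moreover have "\<forall>p\<in>{..<m} \<times> G. ?T p \<in> M"
    proof
      fix p assume p: "p \<in> {..<m} \<times> G"
      then have "inverse (cc (snd p)) \<in> M" using inv_cc_M[OF c hM] ccM by auto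
      then show "?T p \<in> M" using hM unfolding herm_cone_def by blast
    qed
    ultimately have "\<forall>p\<in>{..<m} \<times> G. ?T p = 0"
      using cone_zero[OF hM, of "{..<m} \<times> G" ?T] finG by blast
    then show ?thesis using cc_nz by (auto simp: kst_eq0)
  qed
  show "\<forall>i<m. r i = (\<lambda>_ _. 0)"
  proof (intro allI impI ext)
    fix i \<alpha> \<rho> assume "i < m"
    then show "r i \<alpha> \<rho> = 0" using rows rc unfolding mat_carrier_def by (cases "\<alpha> \<in> G \<and> \<rho> \<in> G") auto
  qed
qed

end

context cpx begin

lemma impl_b:
  assumes c: compat and fm: "formally_real_mat G \<Phi> star"
  shows "formally_real_cp G \<Phi> star"
  unfolding formally_real_cp_def
proof (rule allI, rule allI, rule impI, rule impI)
  fix m :: nat and r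
  assume rc: "\<forall>i<m. r i \<in> carr" and z: "\<forall>\<rho>. (\<Sum>i<m. mult (r i) (star (r i)) \<rho>) = 0"
  define s where "s i = star (r i)" for i
  have sc: "\<forall>i<m. s i \<in> carr" using rc star_carr s_def by simp
  have rs: "\<forall>i<m. mult (r i) (star (r i)) = mult (star (s i)) (s i)" using rc star_star s_def by simp
  have "0 = (\<Sum>i<m. cp_f (mult (star (s i)) (s i)))" using z rs by (simp add: cp_f_def)
  also have "\<dots> = (\<Sum>i<m. \<Sum>\<sigma>\<in>G. kst (s i \<sigma>) * cc \<sigma> * s i \<sigma>)"
    by (rule sum.cong) (auto simp: key_lemma[OF c] sc)
  finally have z2: "(\<Sum>i<m. \<Sum>\<sigma>\<in>G. kst (s i \<sigma>) * cc \<sigma> * s i \<sigma>) = 0" by simp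
  define X where "X i = (\<lambda>\<alpha> \<beta>. if \<alpha> = (id::'k \<Rightarrow> 'k) \<and> \<beta> \<in> G then kst (s i \<beta>) * cc \<beta> else 0)" for i
  have Xc: "\<forall>i<m. X i \<in> mat_carrier G" using idG by (auto simp: X_def mat_carrier_def)
  have XX: "mat_mult G (X i) (mat_sharp G \<Phi> star (X i)) \<alpha> \<beta> =
      (if \<alpha> = id \<and> \<beta> = id then cc id * (\<Sum>\<rho>\<in>G. kst (s i \<rho>) * cc \<rho> * s i \<rho>) else 0)" for i \<alpha> \<beta>
  proof -
    have "mat_mult G (X i) (mat_sharp G \<Phi> star (X i)) \<alpha> \<beta> =
      (\<Sum>\<rho>\<in>G. X i \<alpha> \<rho> * (if \<beta> \<in> G then inverse (cc \<rho>) * kst (X i \<beta> \<rho>) * cc \<beta> else 0))"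
      by (rule prod_sharp_compat[OF c])
    also have "\<dots> = (\<Sum>\<rho>\<in>G. if \<alpha> = id \<and> \<beta> = id then cc id * (kst (s i \<rho>) * cc \<rho> * s i \<rho>) else 0)"
    proof (rule sum.cong[OF refl])
      fix \<rho> assume r: "\<rho> \<in> G"
      show "X i \<alpha> \<rho> * (if \<beta> \<in> G then inverse (cc \<rho>) * kst (X i \<beta> \<rho>) * cc \<beta> else 0) =
        (if \<alpha> = id \<and> \<beta> = id then cc id * (kst (s i \<rho>) * cc \<rho> * s i \<rho>) else 0)"
        using r cc_nz[OF r] cc_herm[OF c r] idG
        by (auto simp: X_def kst_mult kst_kst kst_zero field_simps)
    qed
    also have "\<dots> = (if \<alpha> = id \<and> \<beta> = id then cc id * (\<Sum>\<rho>\<in>G. kst (s i \<rho>) * cc \<rho> * s i \<rho>) else 0)"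
      by (cases "\<alpha> = id"; cases "\<beta> = id") (simp_all add: sum_distrib_left)
    finally show ?thesis .
  qed
  have "\<forall>\<sigma> \<tau>. (\<Sum>i<m. mat_mult G (X i) (mat_sharp G \<Phi> star (X i)) \<sigma> \<tau>) = 0"
  proof (intro allI)
    fix \<sigma> \<tau>
    show "(\<Sum>i<m. mat_mult G (X i) (mat_sharp G \<Phi> star (X i)) \<sigma> \<tau>) = 0"
      using z2 by (cases "\<sigma> = id"; cases "\<tau> = id") (simp_all add: XX sum_distrib_left[symmetric])
  qed
  then have "\<forall>i<m. X i = (\<lambda>_ _. 0)" using fm Xc unfolding formally_real_mat_def by blast
  then have "\<forall>i<m. \<forall>\<beta>\<in>G. kst (s i \<beta>) * cc \<beta> = 0" unfolding X_def by (metis (full_types))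
  then have "\<forall>i<m. \<forall>\<beta>\<in>G. s i \<beta> = 0" using cc_nz by (auto simp: kst_eq0)
  then have "\<forall>i<m. s i = cp_zero" using sc by (auto simp: cp_carrier_def cp_zero_def fun_eq_iff)
  then show "\<forall>i<m. r i = cp_zero" using s_def star_eq_zero rc by auto
qed

end

context cpx begin

definition pii where "pii \<sigma> = inv (rho \<sigma>)"

lemma piiG: "\<sigma> \<in> G \<Longrightarrow> pii \<sigma> \<in> G" by (simp add: pii_def invG rhoG)

lemma comp_rho_iff:
  assumes "\<sigma> \<in> G" "\<tau> \<in> G"
  shows "\<tau> \<circ> rho \<sigma> = id \<longleftrightarrow> \<tau> = pii \<sigma>"
proof -
  have b: "bij (rho \<sigma>)" using bijG rhoG assms by simp
  show ?thesis
  proof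
    assume h: "\<tau> \<circ> rho \<sigma> = id"
    show "\<tau> = pii \<sigma>"
    proof (rule ext)
      fix x
      have e1: "rho \<sigma> (inv (rho \<sigma>) x) = x" using b bij_inv_eq_iff by metis
      have "\<tau> (rho \<sigma> (inv (rho \<sigma>) x)) = inv (rho \<sigma>) x" using h by (metis comp_apply id_apply)
      then show "\<tau> x = pii \<sigma> x" using e1 by (simp add: pii_def)
    qed
  next
    assume "\<tau> = pii \<sigma>"
    then show "\<tau> \<circ> rho \<sigma> = id" using b by (simp add: pii_def bij_is_inj)
  qed
qed

lemma rho_inj: "\<sigma> \<in> G \<Longrightarrow> \<sigma>' \<in> G \<Longrightarrow> rho \<sigma> = rho \<sigma>' \<Longrightarrow> \<sigma> = \<sigma>'"
proof (rule ext)
  fix x assume a: "\<sigma> \<in> G" "\<sigma>' \<in> G" "rho \<sigma> = rho \<sigma>'"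
  have "rho \<sigma> (kst (\<sigma> x)) = rho \<sigma> (kst (\<sigma>' x))" using rho_rel[OF a(1)] rho_rel[OF a(2)] a(3) by metis
  then have "kst (\<sigma> x) = kst (\<sigma>' x)" using injG[OF rhoG[OF a(1)]] by simp
  then show "\<sigma> x = \<sigma>' x" using kst_kst by metis
qed

lemma pii_inj: "inj_on pii G"
proof (rule inj_onI)
  fix \<sigma> \<sigma>' assume a: "\<sigma> \<in> G" "\<sigma>' \<in> G" "pii \<sigma> = pii \<sigma>'"
  have "rho \<sigma> = rho \<sigma>'" using a bijG rhoG by (metis pii_def inv_inv_eq)
  then show "\<sigma> = \<sigma>'" using rho_inj a by blast
qed

lemma pii_surj: "pii ` G = G"
  using endo_inj_surj[OF finG _ pii_inj] piiG by blast

lemma gram_gen: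
  assumes "\<sigma> \<in> G" "\<tau> \<in> G"
  shows "A \<sigma> \<tau> = (if \<tau> = pii \<sigma> then \<Phi> (rho \<sigma>) \<tau> * \<tau> (dd \<sigma>) else 0)"
  using gram_formula[OF assms] comp_rho_iff[OF assms] by simp

lemma gram_pii_nz: "\<sigma> \<in> G \<Longrightarrow> A \<sigma> (pii \<sigma>) \<noteq> 0"
  using gram_gen[OF _ piiG] by (simp add: Phi_nz rhoG piiG eq0G dd_nz)

definition Bg where "Bg = (\<lambda>\<tau> \<sigma>. if \<sigma> \<in> G \<and> \<tau> \<in> G \<and> \<tau> = pii \<sigma> then inverse (A \<sigma> \<tau>) else 0)"

lemma gram_out: "\<sigma> \<notin> G \<or> \<tau> \<notin> G \<Longrightarrow> A \<sigma> \<tau> = 0" by (auto simp: gram_def)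

lemma AB_one: "mat_mult G A Bg = mat_one G"
  proof (intro ext)
    fix \<sigma> \<sigma>'
    show "mat_mult G A Bg \<sigma> \<sigma>' = mat_one G \<sigma> \<sigma>'"
    proof (cases "\<sigma> \<in> G \<and> \<sigma>' \<in> G")
      case True
      have "mat_mult G A Bg \<sigma> \<sigma>' = (\<Sum>\<tau>\<in>G. if \<tau> = pii \<sigma> then (if \<sigma> = \<sigma>' then 1 else 0) else 0)"
        unfolding mat_mult_def
      proof (rule sum.cong[OF refl])
        fix \<tau> assume t: "\<tau> \<in> G"
        show "A \<sigma> \<tau> * Bg \<tau> \<sigma>' = (if \<tau> = pii \<sigma> then (if \<sigma> = \<sigma>' then 1 else 0) else 0)"
        proof (cases "\<tau> = pii \<sigma>")
          case False
          then show ?thesis using gram_gen True t by simp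
        next
          case tt: True
          have "pii \<sigma> = pii \<sigma>' \<longleftrightarrow> \<sigma> = \<sigma>'" using pii_inj True by (auto simp: inj_on_def)
          then show ?thesis using tt True t gram_pii_nz[of \<sigma>] unfolding Bg_def by auto
        qed
      qed
      also have "\<dots> = mat_one G \<sigma> \<sigma>'" using True piiG by (simp add: sum.delta finG mat_one_def)
      finally show ?thesis .
    next
      case False
      have "\<forall>\<tau>\<in>G. A \<sigma> \<tau> * Bg \<tau> \<sigma>' = 0" using False by (auto simp: Bg_def gram_out)
      then have "mat_mult G A Bg \<sigma> \<sigma>' = 0" unfolding mat_mult_def by (rule sum.neutral)
      moreover have "mat_one G \<sigma> \<sigma>' = 0" using False by (auto simp: mat_one_def)
      ultimately show ?thesis by simp
    qed
  qed
lemma BA_one: "mat_mult G Bg A = mat_one G"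
  proof (intro ext)
    fix \<tau> \<tau>'
    show "mat_mult G Bg A \<tau> \<tau>' = mat_one G \<tau> \<tau>'"
    proof (cases "\<tau> \<in> G \<and> \<tau>' \<in> G")
      case True
      then obtain \<sigma>0 where s0: "\<sigma>0 \<in> G" "pii \<sigma>0 = \<tau>" using pii_surj by (metis imageE)
      have "mat_mult G Bg A \<tau> \<tau>' = (\<Sum>\<sigma>\<in>G. if \<sigma> = \<sigma>0 then (if \<tau> = \<tau>' then 1 else 0) else 0)"
        unfolding mat_mult_def
      proof (rule sum.cong[OF refl])
        fix \<sigma> assume s: "\<sigma> \<in> G"
        have e: "pii \<sigma> = \<tau> \<longleftrightarrow> \<sigma> = \<sigma>0" using pii_inj s s0 by (auto simp: inj_on_def)
        show "Bg \<tau> \<sigma> * A \<sigma> \<tau>' = (if \<sigma> = \<sigma>0 then (if \<tau> = \<tau>' then 1 else 0) else 0)"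
        proof (cases "\<sigma> = \<sigma>0")
          case False
          then have "\<tau> \<noteq> pii \<sigma>" using e by metis
          then show ?thesis using False by (simp add: Bg_def)
        next
          case ss: True
          have tp: "\<tau> = pii \<sigma>" using ss s0 by simp
          have B: "Bg \<tau> \<sigma> = inverse (A \<sigma> \<tau>)" using tp s True by (simp add: Bg_def)
          have nz: "A \<sigma> \<tau> \<noteq> 0" using gram_pii_nz[OF s] tp by simp
          have At: "A \<sigma> \<tau>' = (if \<tau>' = \<tau> then A \<sigma> \<tau> else 0)"
          proof (cases "\<tau>' = \<tau>")
            case True then show ?thesis by simp
          next
            case ne: False
            then have "\<tau>' \<noteq> pii \<sigma>" using tp by simp
            then have "A \<sigma> \<tau>' = 0" using gram_gen[OF s conjunct2[OF True]] by simp
            then show ?thesis using ne by simp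
          qed
          have "Bg \<tau> \<sigma> * A \<sigma> \<tau>' = (if \<tau> = \<tau>' then 1 else 0)"
          proof (cases "\<tau> = \<tau>'")
            case True then show ?thesis using B nz by simp
          next
            case False then show ?thesis using At by simp
          qed
          then show ?thesis using ss by simp
        qed
      qed
      also have "\<dots> = mat_one G \<tau> \<tau>'" using True s0 by (simp add: sum.delta finG mat_one_def)
      finally show ?thesis .
    next
      case False
      have "\<forall>\<sigma>\<in>G. Bg \<tau> \<sigma> * A \<sigma> \<tau>' = 0" using False by (auto simp: Bg_def gram_out)
      then have "mat_mult G Bg A \<tau> \<tau>' = 0" unfolding mat_mult_def by (rule sum.neutral)
      moreover have "mat_one G \<tau> \<tau>' = 0" using False by (auto simp: mat_one_def)
      ultimately show ?thesis by simp
    qed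
  qed

lemma mat_inv_gen: "mat_inv G A = Bg"
  by (rule mat_inv_eq[OF finG _ AB_one BA_one]) (auto simp: Bg_def mat_carrier_def)

lemma impl_a:
  assumes fm: "formally_real_mat G \<Phi> star"
  shows compat
  unfolding compat_iff
proof
  fix \<sigma> assume s: "\<sigma> \<in> G"
  show "\<sigma> \<circ> rho \<sigma> = id"
  proof (rule ccontr)
    assume ne: "\<sigma> \<circ> rho \<sigma> \<noteq> id"
    have A0: "A \<sigma> \<sigma> = 0" using gram_formula[OF s s] ne by simp
    define E where "E = (\<lambda>\<alpha> \<beta>. if \<alpha> = \<sigma> \<and> \<beta> = \<sigma> then (1::'k) else 0)"
    define X where "X = mat_mult G E A"
    have Xf: "X = (\<lambda>\<alpha> \<beta>. if \<alpha> = \<sigma> then A \<sigma> \<beta> else 0)"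
      unfolding X_def E_def mat_mult_def
      by (intro ext) (auto simp: s finG if_distrib[of "\<lambda>x. x * _"] sum.delta cong: if_cong)
    have Ec: "E \<in> mat_carrier G" using s by (auto simp: E_def mat_carrier_def)
    have Xc: "X \<in> mat_carrier G" using s by (auto simp: Xf mat_carrier_def gram_out)
    have XB: "mat_mult G X Bg = E"
      unfolding X_def mat_assoc[OF finG] AB_one using mat_one_right[OF Ec finG] .
    have EXc: "mat_mult G E (mat_conj G star X) = (\<lambda>_ _. 0)"
      unfolding mat_mult_def E_def mat_conj_def
      by (intro ext) (auto simp: Xf A0 kst_zero if_distrib[of "\<lambda>x. x * _"] sum.delta finG cong: if_cong)
    have "mat_mult G X (mat_sharp G \<Phi> star X) = mat_mult G (mat_mult G (mat_mult G X Bg) (mat_conj G star X)) A"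
      unfolding mat_sharp_def mat_inv_gen mat_assoc[OF finG] ..
    also have "\<dots> = (\<lambda>_ _. 0)" unfolding XB EXc by (simp add: mat_mult_def)
    finally have fin: "\<forall>\<alpha> \<beta>. (\<Sum>i<(1::nat). mat_mult G ((\<lambda>_. X) i) (mat_sharp G \<Phi> star ((\<lambda>_. X) i)) \<alpha> \<beta>) = 0"
      by simp
    have "\<forall>i<(1::nat). (\<lambda>_. X) i = (\<lambda>_ _. 0)"
      using fm[unfolded formally_real_mat_def, THEN spec[of _ 1], THEN spec[of _ "\<lambda>_. X"]] Xc fin by simp
    then have "X = (\<lambda>_ _. 0)" by simp
    moreover have "X \<sigma> (pii \<sigma>) = A \<sigma> (pii \<sigma>)" using Xf by simp
    ultimately have "A \<sigma> (pii \<sigma>) = 0" by simp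
    then show False using gram_pii_nz[OF s] by simp
  qed
qed

end

theorem theorem3p3:
  fixes G :: "('k::field_char_0 \<Rightarrow> 'k) set"
    and \<Phi> :: "('k \<Rightarrow> 'k) \<Rightarrow> ('k \<Rightarrow> 'k) \<Rightarrow> 'k"
    and star :: "(('k \<Rightarrow> 'k) \<Rightarrow> 'k) \<Rightarrow> (('k \<Rightarrow> 'k) \<Rightarrow> 'k)"
  assumes "galois_group G"
    and "normalized_cocycle G \<Phi>"
    and "is_division_cp G \<Phi>"
    and "is_involution_cp G \<Phi> star"
    and "\<forall>k. star (cp_emb k) \<in> range cp_emb"
  shows "(formally_real_mat G \<Phi> star \<longleftrightarrow>
           (formally_real_cp G \<Phi> star \<and> (\<forall>k. \<forall>\<sigma>\<in>G. \<sigma> (kstar star k) = kstar star (\<sigma> k))))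
       \<and> ((formally_real_cp G \<Phi> star \<and> (\<forall>k. \<forall>\<sigma>\<in>G. \<sigma> (kstar star k) = kstar star (\<sigma> k))) \<longleftrightarrow>
           ((\<forall>\<sigma>\<in>G. cp_mult G \<Phi> (star (cp_basis \<sigma>)) (cp_basis \<sigma>) \<in> range cp_emb)
            \<and> (\<exists>M. herm_cone (kstar star) M
                   \<and> (\<forall>\<sigma>\<in>G. cp_f (cp_mult G \<Phi> (star (cp_basis \<sigma>)) (cp_basis \<sigma>)) \<in> M))))"
proof -
  interpret cpx G \<Phi> star using assms by (simp add: cpx_def)
  have cf: "(\<forall>k. \<forall>\<sigma>\<in>G. \<sigma> (kstar star k) = kstar star (\<sigma> k)) \<longleftrightarrow> compat" by (simp add: compat_def)
  have fcc: "compat \<Longrightarrow> \<sigma> \<in> G \<Longrightarrow> cp_f (cp_mult G \<Phi> (star (cp_basis \<sigma>)) (cp_basis \<sigma>)) = cc \<sigma>" for \<sigma>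
    by (simp add: cc_basis cp_f_def cp_emb_def)
  have 12: "formally_real_mat G \<Phi> star \<longleftrightarrow> (formally_real_cp G \<Phi> star \<and> compat)"
    using impl_a impl_b impl_c impl_f by blast
  have 23: "(formally_real_cp G \<Phi> star \<and> compat) \<longleftrightarrow>
           ((\<forall>\<sigma>\<in>G. cp_mult G \<Phi> (star (cp_basis \<sigma>)) (cp_basis \<sigma>) \<in> range cp_emb)
            \<and> (\<exists>M. herm_cone (kstar star) M
                   \<and> (\<forall>\<sigma>\<in>G. cp_f (cp_mult G \<Phi> (star (cp_basis \<sigma>)) (cp_basis \<sigma>)) \<in> M)))"
  proof
    assume h: "formally_real_cp G \<Phi> star \<and> compat"
    then have c: compat by simp
    show "(\<forall>\<sigma>\<in>G. cp_mult G \<Phi> (star (cp_basis \<sigma>)) (cp_basis \<sigma>) \<in> range cp_emb)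
            \<and> (\<exists>M. herm_cone (kstar star) M
                   \<and> (\<forall>\<sigma>\<in>G. cp_f (cp_mult G \<Phi> (star (cp_basis \<sigma>)) (cp_basis \<sigma>)) \<in> M))"
      using impl_c[OF c] h cc_basis[OF c] fcc[OF c] by auto
  next
    assume h: "(\<forall>\<sigma>\<in>G. cp_mult G \<Phi> (star (cp_basis \<sigma>)) (cp_basis \<sigma>) \<in> range cp_emb)
            \<and> (\<exists>M. herm_cone (kstar star) M
                   \<and> (\<forall>\<sigma>\<in>G. cp_f (cp_mult G \<Phi> (star (cp_basis \<sigma>)) (cp_basis \<sigma>)) \<in> M))"
    then have c: compat using impl_d by blast
    from h obtain M where M: "herm_cone (kstar star) M"
      "\<forall>\<sigma>\<in>G. cp_f (cp_mult G \<Phi> (star (cp_basis \<sigma>)) (cp_basis \<sigma>)) \<in> M" by blast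
    have "\<forall>\<sigma>\<in>G. cc \<sigma> \<in> M" using M(2) fcc[OF c] by simp
    then show "formally_real_cp G \<Phi> star \<and> compat" using impl_e[OF c M(1)] c by blast
  qed
  show ?thesis unfolding cf using 12 23 by blast
qed

end
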